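(* Let $\boldsymbol{m}\in\mathbb{N}^2$. The rectangular set $\Gamma_\square=\{\boldsymbol{\gamma}\in\mathrm{K}:\ -m_2<\gamma_2\le m_2,\ \gamma_1+\gamma_2\text{ even}\}$ is a spectral index set for $\mathrm{I}^{(\boldsymbol{m})}$, i.e. $\{\chi_{\boldsymbol{\gamma}}:\boldsymbol{\gamma}\in\Gamma_\square\}$ is an orthogonal basis of the $(2m_1+1)m_2$-dimensional space $(\mathcal{L}(\mathrm{I}^{(\boldsymbol{m})}),\langle\cdot,\cdot\rangle_w)$. Moreover, for $\boldsymbol{\gamma}\in\Gamma_\square$, $\|\chi_{\boldsymbol{\gamma}}\|_w^2=1$ if $\gamma_1\in\{0,2m_1\}$ and $\|\chi_{\boldsymbol{\gamma}}\|_w^2=\frac12$ otherwise.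
   Context: $\mathrm{I}^{(\boldsymbol{m})}=\{(i_1,i_2)\in\mathbb{Z}^2:\ 0\le i_1\le m_1,\ -2m_2<i_2\le 2m_2,\ i_2\le0\text{ if }i_1=m_1,\ i_1+i_2\text{ even}\}$; $\mathcal{L}(\mathrm{I}^{(\boldsymbol{m})})$ is the space of all functions $\mathrm{I}^{(\boldsymbol{m})}\to\mathbb{C}$. Weights: $w_{\boldsymbol{i}}=\frac{1}{4m_1m_2}$ if $i_1=0$, $w_{\boldsymbol{i}}=\frac{2}{4m_1m_2}$ if $0<i_1\le m_1$; inner product $\langle f,h\rangle_w=\sum_{\boldsymbol{i}\in\mathrm{I}^{(\boldsymbol{m})}}w_{\boldsymbol{i}}f(\boldsymbol{i})\overline{h(\boldsymbol{i})}$, norm $\|\cdot\|_w$. For $\boldsymbol{\gamma}\in\mathbb{Z}^2$, $\chi_{\boldsymbol{\gamma}}(\boldsymbol{i})=\cos\!\big(\frac{\gamma_1i_1\pi}{2m_1}\big)e^{\mathrm{i}\gamma_2i_2\pi/(2m_2)}$. $\mathrm{K}=\{\boldsymbol{\gamma}\in\mathbb{Z}^2: 0\le\gamma_1\le2m_1,\ -2m_2<\gamma_2\le2m_2\}$. A spectral index set for $\mathrm{I}^{(\boldsymbol{m})}$ is a set $\Gamma\subseteq\mathrm{K}$ such that $\gamma_1+\gamma_2$ is even for all $\boldsymbol{\gamma}\in\Gamma$ and $\{\chi_{\boldsymbol{\gamma}}:\boldsymbol{\gamma}\in\Gamma\}$ is an orthogonal basis of $(\mathcal{L}(\mathrm{I}^{(\boldsymbol{m})}),\langle\cdot,\cdot\rangle_w)$.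 *)

theory Defs
  imports "HOL-Analysis.Analysis"
begin

definition Iset :: "nat \<Rightarrow> nat \<Rightarrow> (int \<times> int) set" where
  "Iset m1 m2 = {(i1, i2). 0 \<le> i1 \<and> i1 \<le> int m1 \<and> - 2 * int m2 < i2 \<and> i2 \<le> 2 * int m2
      \<and> (i1 = int m1 \<longrightarrow> i2 \<le> 0) \<and> even (i1 + i2)}"

definition wgt :: "nat \<Rightarrow> nat \<Rightarrow> int \<times> int \<Rightarrow> real" where
  "wgt m1 m2 i = (if fst i = 0 then 1 / (4 * real m1 * real m2) else 2 / (4 * real m1 * real m2))"

text \<open>Functions on Iset are represented by arbitrary functions int*int => complex; only
  their values on Iset matter.\<close>

definition inner_w :: "nat \<Rightarrow> nat \<Rightarrow> (int \<times> int \<Rightarrow> complex) \<Rightarrow> (int \<times> int \<Rightarrow> complex) \<Rightarrow> complex" where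
  "inner_w m1 m2 f h = (\<Sum>i\<in>Iset m1 m2. complex_of_real (wgt m1 m2 i) * f i * cnj (h i))"

definition norm_w :: "nat \<Rightarrow> nat \<Rightarrow> (int \<times> int \<Rightarrow> complex) \<Rightarrow> real" where
  "norm_w m1 m2 f = sqrt (Re (inner_w m1 m2 f f))"

definition chi :: "nat \<Rightarrow> nat \<Rightarrow> int \<times> int \<Rightarrow> int \<times> int \<Rightarrow> complex" where
  "chi m1 m2 \<gamma> i = complex_of_real (cos (real_of_int (fst \<gamma>) * real_of_int (fst i) * pi / (2 * real m1)))
      * exp (\<i> * complex_of_real (real_of_int (snd \<gamma>) * real_of_int (snd i) * pi / (2 * real m2)))"

definition Kset :: "nat \<Rightarrow> nat \<Rightarrow> (int \<times> int) set" where
  "Kset m1 m2 = {(g1, g2). 0 \<le> g1 \<and> g1 \<le> 2 * int m1 \<and> - 2 * int m2 < g2 \<and> g2 \<le> 2 * int m2}"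

definition spectral_index_set :: "nat \<Rightarrow> nat \<Rightarrow> (int \<times> int) set \<Rightarrow> bool" where
  "spectral_index_set m1 m2 \<Gamma> \<longleftrightarrow>
     \<Gamma> \<subseteq> Kset m1 m2 \<and> (\<forall>\<gamma>\<in>\<Gamma>. even (fst \<gamma> + snd \<gamma>)) \<and>
     (\<forall>\<gamma>\<in>\<Gamma>. \<forall>\<gamma>'\<in>\<Gamma>. \<gamma> \<noteq> \<gamma>' \<longrightarrow> inner_w m1 m2 (chi m1 m2 \<gamma>) (chi m1 m2 \<gamma>') = 0) \<and>
     (\<forall>\<gamma>\<in>\<Gamma>. \<exists>i\<in>Iset m1 m2. chi m1 m2 \<gamma> i \<noteq> 0) \<and>
     (\<forall>f :: int \<times> int \<Rightarrow> complex. \<exists>c :: int \<times> int \<Rightarrow> complex.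
        \<forall>i\<in>Iset m1 m2. f i = (\<Sum>\<gamma>\<in>\<Gamma>. c \<gamma> * chi m1 m2 \<gamma> i))"

definition Gamma_sq :: "nat \<Rightarrow> nat \<Rightarrow> (int \<times> int) set" where
  "Gamma_sq m1 m2 = {\<gamma> \<in> Kset m1 m2. - int m2 < snd \<gamma> \<and> snd \<gamma> \<le> int m2 \<and> even (fst \<gamma> + snd \<gamma>)}"

end

theory Submission
  imports Defs "Jordan_Normal_Form.Determinant"
begin

definition Pset :: "int \<Rightarrow> nat \<Rightarrow> int \<Rightarrow> int set" where
  "Pset a n p = {x. a < x \<and> x \<le> a + 2 * int n \<and> even (x + p)}"

lemma Pset_param:
  fixes a p :: int
  defines "x0 \<equiv> (if even (a + 1 + p) then a + 1 else a + 2)"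
  shows "Pset a n p = (\<lambda>k. x0 + 2 * int k) ` {..<n}"
proof -
  have x0p: "even (x0 + p)" "a < x0" "x0 \<le> a + 2" unfolding x0_def by auto
  show ?thesis
  proof
  show "Pset a n p \<subseteq> (\<lambda>k. x0 + 2 * int k) ` {..<n}"
  proof
    fix x assume "x \<in> Pset a n p"
    hence x: "a < x" "x \<le> a + 2 * int n" "even (x + p)" by (auto simp: Pset_def)
    obtain u where u: "x + p = 2 * u" using x(3) by blast
    obtain v where v: "x0 + p = 2 * v" using x0p(1) by blast
    have t: "x - x0 = 2 * (u - v)" using u v by (simp add: algebra_simps)
    define t where "t = u - v"
    have t: "x - x0 = 2 * t" using t unfolding t_def .
    have g: "0 \<le> t" using x(1) x0p(3) t by linarith
    have "x = x0 + 2 * int (nat t)" using t g by simp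
    moreover have "nat t < n" using x(2) x0p(2) t g by linarith
    ultimately show "x \<in> (\<lambda>k. x0 + 2 * int k) ` {..<n}" by blast
  qed
  show "(\<lambda>k. x0 + 2 * int k) ` {..<n} \<subseteq> Pset a n p"
  proof
    fix x assume "x \<in> (\<lambda>k. x0 + 2 * int k) ` {..<n}"
    then obtain k where k: "k < n" "x = x0 + 2 * int k" by blast
    have "even (x + p)" using x0p(1) k(2) by (simp add: algebra_simps)
    thus "x \<in> Pset a n p" unfolding Pset_def using k x0p by auto
  qed
  qed
qed

lemma Pset_card: "card (Pset a n p) = n"
  unfolding Pset_param by (subst card_image) (auto simp: inj_on_def)

lemma Pset_finite: "finite (Pset a n p)"
  unfolding Pset_param by auto

lemma Pset_exp_sum:
  fixes \<theta> :: real
  assumes "exp (\<i> * of_real (2 * \<theta>)) \<noteq> 1" "exp (\<i> * of_real (2 * \<theta>)) ^ n = 1"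
  shows "(\<Sum>x\<in>Pset a n p. exp (\<i> * of_real (\<theta> * of_int x))) = 0"
proof -
  define x0 where "x0 = (if even (a + 1 + p) then a + 1 else a + 2)"
  define z where "z = exp (\<i> * of_real (2 * \<theta>))"
  have "(\<Sum>x\<in>Pset a n p. exp (\<i> * of_real (\<theta> * of_int x)))
      = (\<Sum>k<n. exp (\<i> * of_real (\<theta> * of_int (x0 + 2 * int k))))"
    unfolding Pset_param x0_def by (subst sum.reindex) (auto simp: inj_on_def)
  also have "\<dots> = (\<Sum>k<n. exp (\<i> * of_real (\<theta> * of_int x0)) * z ^ k)"
  proof (rule sum.cong[OF refl])
    fix k
    have "exp (\<i> * of_real (\<theta> * of_int (x0 + 2 * int k))) = exp (\<i> * of_real (\<theta> * of_int x0) + of_nat k * (\<i> * of_real (2 * \<theta>)))"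
      by (rule arg_cong[where f=exp]) (simp add: algebra_simps)
    also have "\<dots> = exp (\<i> * of_real (\<theta> * of_int x0)) * z ^ k"
      unfolding z_def by (simp only: exp_add exp_of_nat_mult)
    finally show "exp (\<i> * of_real (\<theta> * of_int (x0 + 2 * int k))) = exp (\<i> * of_real (\<theta> * of_int x0)) * z ^ k" .
  qed
  also have "\<dots> = exp (\<i> * of_real (\<theta> * of_int x0)) * (\<Sum>k<n. z ^ k)"
    by (simp add: sum_distrib_left)
  also have "\<dots> = 0"
    using assms unfolding z_def[symmetric] by (simp add: geometric_sum)
  finally show ?thesis .
qed


lemma exp_i_eq_1: "exp (\<i> * of_real t) = 1 \<longleftrightarrow> (\<exists>n::int. t = 2 * pi * of_int n)"
  by (auto simp: exp_eq_1 mult_ac)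

lemma exp_pow_eq: "exp (\<i> * of_real \<theta>) ^ k = exp (\<i> * of_real (of_nat k * \<theta>))"
proof -
  have "exp (\<i> * of_real \<theta>) ^ k = exp (of_nat k * (\<i> * of_real \<theta>))"
    by (rule exp_of_nat_mult[symmetric])
  also have "\<dots> = exp (\<i> * of_real (of_nat k * \<theta>))"
    by (rule arg_cong[where f=exp]) simp
  finally show ?thesis .
qed

lemma Re_exp_i: "Re (exp (\<i> * of_real x)) = cos x"
  by (simp add: Re_exp)

lemma geom_exp_zero:
  assumes "exp (\<i> * of_real \<theta>) \<noteq> 1" "exp (\<i> * of_real (of_nat n * \<theta>)) = 1"
  shows "(\<Sum>k<n. exp (\<i> * of_real (of_nat k * \<theta>))) = 0"
proof -
  define z where "z = exp (\<i> * of_real \<theta>)"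
  have zn: "z ^ n = 1" unfolding z_def exp_pow_eq by (rule assms(2))
  have "(\<Sum>k<n. exp (\<i> * of_real (of_nat k * \<theta>))) = (\<Sum>k<n. z ^ k)"
    unfolding z_def exp_pow_eq ..
  also have "\<dots> = 0"
    using assms(1) zn unfolding z_def[symmetric] by (simp add: geometric_sum)
  finally show ?thesis .
qed

lemma int_small_mult:
  fixes d n :: int and m :: nat
  assumes "\<bar>d\<bar> < 2 * int m" "d = 2 * int m * n"
  shows "d = 0"
proof (rule ccontr)
  assume "d \<noteq> 0"
  hence "n \<noteq> 0" using assms by auto
  hence "1 \<le> \<bar>n\<bar>" by simp
  hence "2 * int m * 1 \<le> 2 * int m * \<bar>n\<bar>" by (intro mult_left_mono) auto
  also have "\<dots> = \<bar>d\<bar>" using assms(2) by (simp add: abs_mult)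
  finally show False using assms(1) by simp
qed

lemma exp_frac_ne_1:
  fixes d :: int and m :: nat
  assumes "d \<noteq> 0" "\<bar>d\<bar> < 2 * int m"
  shows "exp (\<i> * of_real (of_int d * pi / real m)) \<noteq> 1"
proof
  assume "exp (\<i> * of_real (of_int d * pi / real m)) = 1"
  then obtain n :: int where n: "of_int d * pi / real m = 2 * pi * of_int n"
    unfolding exp_i_eq_1 by blast
  have "m > 0" using assms by auto
  hence "real_of_int d = real_of_int (2 * int m * n)" using n pi_gt_zero
    by (simp add: field_simps)
  hence "d = 2 * int m * n" by (simp only: of_int_eq_iff)
  with int_small_mult[OF assms(2)] assms(1) show False by simp
qed

lemma exp_2pi_int: "exp (\<i> * of_real (2 * pi * of_int n)) = 1"
  using exp_i_eq_1 by blast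

lemma Q_sum:
  fixes e :: int and m :: nat
  assumes "even e" "m > 0"
  shows "(\<Sum>j\<in>{0..<2 * int m}. cos (of_int e * of_int j * pi / (2 * real m)))
      = (if (4 * int m) dvd e then 2 * real m else 0)"
proof -
  have "(\<Sum>j\<in>{0..<2 * int m}. cos (of_int e * of_int j * pi / (2 * real m)))
      = (\<Sum>k<2 * m. cos (of_int e * of_nat k * pi / (2 * real m)))"
  proof -
    have "{0..<2 * int m} = int ` {..<2 * m}"
      by (auto simp: image_iff intro!: bexI[where x="nat _"])
    thus ?thesis by (simp add: sum.reindex)
  qed
  also have "\<dots> = (\<Sum>k<2 * m. Re (exp (\<i> * of_real (of_nat k * (of_int e * pi / (2 * real m))))))"
    unfolding Re_exp_i by (intro sum.cong refl arg_cong[where f=cos]) (simp add: field_simps)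
  also have "\<dots> = Re (\<Sum>k<2 * m. exp (\<i> * of_real (of_nat k * (of_int e * pi / (2 * real m)))))"
    by (simp add: Re_sum)
  also have "\<dots> = (if (4 * int m) dvd e then 2 * real m else 0)"
  proof (cases "(4 * int m) dvd e")
    case True
    then obtain q where q: "e = 4 * int m * q" by blast
    have "exp (\<i> * of_real (of_nat k * (of_int e * pi / (2 * real m)))) = 1" for k
    proof -
      have "of_nat k * (of_int e * pi / (2 * real m)) = 2 * pi * of_int (int k * q)"
        using assms(2) by (simp add: q field_simps)
      thus ?thesis by (simp only: exp_2pi_int)
    qed
    thus ?thesis using True by simp
  next
    case False
    have ne: "exp (\<i> * of_real (of_int e * pi / (2 * real m))) \<noteq> 1"
    proof
      assume "exp (\<i> * of_real (of_int e * pi / (2 * real m))) = 1"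
      then obtain n :: int where n: "of_int e * pi / (2 * real m) = 2 * pi * of_int n"
        unfolding exp_i_eq_1 by blast
      hence "real_of_int e = real_of_int (4 * int m * n)" using assms(2) pi_gt_zero
        by (simp add: field_simps)
      hence "e = 4 * int m * n" by (simp only: of_int_eq_iff)
      thus False using False by simp
    qed
    obtain h where h: "e = 2 * h" using assms(1) by blast
    have one: "exp (\<i> * of_real (of_nat (2 * m) * (of_int e * pi / (2 * real m)))) = 1"
    proof -
      have "of_nat (2 * m) * (of_int e * pi / (2 * real m)) = 2 * pi * of_int h"
        using assms(2) by (simp add: h field_simps)
      thus ?thesis by (simp only: exp_2pi_int)
    qed
    show ?thesis using geom_exp_zero[OF ne one] False by simp
  qed
  finally show ?thesis .
qed

lemma sym_sum:
  fixes g :: "int \<Rightarrow> real" and m :: nat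
  assumes "m > 0" "\<And>j. g (2 * int m - j) = g j"
  shows "(\<Sum>j\<in>{0..<2 * int m}. g j) = g 0 + g (int m) + 2 * (\<Sum>j\<in>{1..<int m}. g j)"
proof -
  have split: "{0..<2 * int m} = {0} \<union> {1..<int m} \<union> {int m} \<union> {int m + 1..<2 * int m}"
    using assms(1) by auto
  have r: "(\<Sum>j\<in>{int m + 1..<2 * int m}. g j) = (\<Sum>j\<in>{1..<int m}. g j)"
    by (rule sum.reindex_bij_witness[where i="\<lambda>j. 2 * int m - j" and j="\<lambda>j. 2 * int m - j"])
       (auto simp: assms(2))
  have "(\<Sum>j\<in>{0..<2 * int m}. g j) = g 0 + (\<Sum>j\<in>{1..<int m}. g j) + g (int m) + (\<Sum>j\<in>{int m + 1..<2 * int m}. g j)"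
    unfolding split using assms(1)
    by (subst sum.union_disjoint, simp, simp, force)+ (simp add: sum.union_disjoint)
  thus ?thesis using r by simp
qed


definition ct :: "nat \<Rightarrow> int \<Rightarrow> int \<Rightarrow> real" where
  "ct m a j = cos (of_int a * of_int j * pi / (2 * real m))"

definition Rrow :: "nat \<Rightarrow> nat \<Rightarrow> int \<Rightarrow> int set" where
  "Rrow m1 m2 i1 = {i2. - 2 * int m2 < i2 \<and> i2 \<le> 2 * int m2 \<and> (i1 = int m1 \<longrightarrow> i2 \<le> 0) \<and> even (i1 + i2)}"

definition Wt :: "nat \<Rightarrow> nat \<Rightarrow> int \<Rightarrow> real" where
  "Wt m1 m2 i1 = (if i1 = 0 then 1 / (4 * real m1 * real m2) else 2 / (4 * real m1 * real m2))"

lemma Iset_Sigma: "Iset m1 m2 = Sigma {0..int m1} (Rrow m1 m2)"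
  unfolding Iset_def Rrow_def by auto

lemma Rrow_lt: "i1 \<noteq> int m1 \<Longrightarrow> Rrow m1 m2 i1 = Pset (- 2 * int m2) (2 * m2) i1"
  unfolding Rrow_def Pset_def by (auto simp: add.commute)

lemma Rrow_m1: "Rrow m1 m2 (int m1) = Pset (- 2 * int m2) m2 (int m1)"
  unfolding Rrow_def Pset_def by (auto simp: add.commute)

lemma Rrow_finite: "finite (Rrow m1 m2 i1)"
  by (cases "i1 = int m1") (simp_all add: Rrow_lt Rrow_m1 Pset_finite)

lemma Iset_finite: "finite (Iset m1 m2)"
  unfolding Iset_Sigma by (rule finite_SigmaI) (auto simp: Rrow_finite)

lemma exp_mult_cnj: "exp (\<i> * of_real A) * cnj (exp (\<i> * of_real B)) = exp (\<i> * of_real (A - B))"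
proof -
  have "cnj (exp (\<i> * of_real B)) = exp (- (\<i> * of_real B))"
    by (simp add: exp_cnj)
  hence "exp (\<i> * of_real A) * cnj (exp (\<i> * of_real B)) = exp (\<i> * of_real A + - (\<i> * of_real B))"
    by (simp only: exp_add)
  also have "\<dots> = exp (\<i> * of_real (A - B))"
    by (rule arg_cong[where f=exp]) (simp add: algebra_simps)
  finally show ?thesis .
qed

definition th :: "nat \<Rightarrow> int \<Rightarrow> real" where
  "th m d = of_int d * pi / (2 * real m)"

lemma chi_cnj:
  assumes "m2 > 0"
  shows "chi m1 m2 g i * cnj (chi m1 m2 g' i)
    = of_real (ct m1 (fst g) (fst i) * ct m1 (fst g') (fst i))
      * exp (\<i> * of_real (th m2 (snd g - snd g') * of_int (snd i)))"
proof -
  have "chi m1 m2 g i * cnj (chi m1 m2 g' i)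
    = of_real (ct m1 (fst g) (fst i) * ct m1 (fst g') (fst i))
      * (exp (\<i> * of_real (of_int (snd g) * of_int (snd i) * pi / (2 * real m2)))
        * cnj (exp (\<i> * of_real (of_int (snd g') * of_int (snd i) * pi / (2 * real m2)))))"
    unfolding chi_def ct_def by (simp add: mult_ac)
  also have "\<dots> = of_real (ct m1 (fst g) (fst i) * ct m1 (fst g') (fst i))
      * exp (\<i> * of_real (th m2 (snd g - snd g') * of_int (snd i)))"
    unfolding exp_mult_cnj
    by (intro arg_cong2[where f="(*)"] refl arg_cong[where f=exp]) (use assms in \<open>simp add: th_def field_simps\<close>)
  finally show ?thesis .
qed

lemma inner_rows:
  assumes "m2 > 0"
  shows "inner_w m1 m2 (chi m1 m2 g) (chi m1 m2 g')
   = (\<Sum>i1\<in>{0..int m1}. of_real (Wt m1 m2 i1 * (ct m1 (fst g) i1 * ct m1 (fst g') i1))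
        * (\<Sum>i2\<in>Rrow m1 m2 i1. exp (\<i> * of_real (th m2 (snd g - snd g') * of_int i2))))"
proof -
  have "inner_w m1 m2 (chi m1 m2 g) (chi m1 m2 g')
      = (\<Sum>i\<in>Iset m1 m2. of_real (wgt m1 m2 i) * (chi m1 m2 g i * cnj (chi m1 m2 g' i)))"
    unfolding inner_w_def by (simp add: mult_ac)
  also have "\<dots> = (\<Sum>i1\<in>{0..int m1}. \<Sum>i2\<in>Rrow m1 m2 i1.
      of_real (wgt m1 m2 (i1, i2)) * (chi m1 m2 g (i1, i2) * cnj (chi m1 m2 g' (i1, i2))))"
    unfolding Iset_Sigma by (subst sum.Sigma) (auto simp: Rrow_finite)
  also have "\<dots> = (\<Sum>i1\<in>{0..int m1}. \<Sum>i2\<in>Rrow m1 m2 i1.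
      of_real (Wt m1 m2 i1 * (ct m1 (fst g) i1 * ct m1 (fst g') i1))
        * exp (\<i> * of_real (th m2 (snd g - snd g') * of_int i2)))"
    unfolding chi_cnj[OF assms] by (intro sum.cong refl) (simp add: wgt_def Wt_def)
  also have "\<dots> = (\<Sum>i1\<in>{0..int m1}. of_real (Wt m1 m2 i1 * (ct m1 (fst g) i1 * ct m1 (fst g') i1))
        * (\<Sum>i2\<in>Rrow m1 m2 i1. exp (\<i> * of_real (th m2 (snd g - snd g') * of_int i2))))"
    by (simp add: sum_distrib_left)
  finally show ?thesis .
qed


lemma rowsum_zero_lt:
  assumes "m2 > 0" "d \<noteq> 0" "\<bar>d\<bar> < 2 * int m2" "i1 \<noteq> int m1"
  shows "(\<Sum>i2\<in>Rrow m1 m2 i1. exp (\<i> * of_real (th m2 d * of_int i2))) = 0"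
  unfolding Rrow_lt[OF assms(4)]
proof (rule Pset_exp_sum)
  have e: "2 * th m2 d = of_int d * pi / real m2" unfolding th_def using assms(1) by simp
  show "exp (\<i> * of_real (2 * th m2 d)) \<noteq> 1" unfolding e by (rule exp_frac_ne_1[OF assms(2,3)])
  have "of_nat (2 * m2) * (2 * th m2 d) = 2 * pi * of_int d" unfolding th_def using assms(1) by simp
  thus "exp (\<i> * of_real (2 * th m2 d)) ^ (2 * m2) = 1"
    unfolding exp_pow_eq by (simp only: exp_2pi_int)
qed

lemma rowsum_zero_m1:
  assumes "m2 > 0" "d \<noteq> 0" "\<bar>d\<bar> < 2 * int m2" "even d"
  shows "(\<Sum>i2\<in>Rrow m1 m2 (int m1). exp (\<i> * of_real (th m2 d * of_int i2))) = 0"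
  unfolding Rrow_m1
proof (rule Pset_exp_sum)
  have e: "2 * th m2 d = of_int d * pi / real m2" unfolding th_def using assms(1) by simp
  show "exp (\<i> * of_real (2 * th m2 d)) \<noteq> 1" unfolding e by (rule exp_frac_ne_1[OF assms(2,3)])
  obtain h where h: "d = 2 * h" using assms(4) by blast
  have "of_nat m2 * (2 * th m2 d) = 2 * pi * of_int h" unfolding th_def using assms(1) by (simp add: h)
  thus "exp (\<i> * of_real (2 * th m2 d)) ^ m2 = 1"
    unfolding exp_pow_eq by (simp only: exp_2pi_int)
qed

lemma rowsum_zero_d:
  "(\<Sum>i2\<in>Rrow m1 m2 i1. exp (\<i> * of_real (th m2 0 * of_int i2))) = of_nat (card (Rrow m1 m2 i1))"
  by (simp add: th_def)

lemma card_Rrow: "card (Rrow m1 m2 i1) = (if i1 = int m1 then m2 else 2 * m2)"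
  by (simp add: Rrow_lt Rrow_m1 Pset_card)

lemma ct_odd_m: assumes "odd a" "m > 0" shows "ct m a (int m) = 0"
proof -
  have "of_int a * of_int (int m) * pi / (2 * real m) = of_int a * (pi / 2)" using assms(2) by simp
  thus ?thesis unfolding ct_def using assms(1) cos_zero_iff_int by auto
qed

lemma ct_sym: assumes "even e" "m > 0" shows "ct m e (2 * int m - j) = ct m e j"
proof -
  obtain h where h: "e = 2 * h" using assms(1) by blast
  have "of_int e * of_int (2 * int m - j) * pi / (2 * real m) = 2 * pi * of_int h - of_int e * of_int j * pi / (2 * real m)"
    using assms(2) by (simp add: h field_simps)
  thus ?thesis unfolding ct_def by (simp add: cos_diff)
qed

lemma ct_prod: "ct m a j * ct m b j = (ct m (a - b) j + ct m (a + b) j) / 2"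
proof -
  have 1: "of_int a * of_int j * pi / (2 * real m) - of_int b * of_int j * pi / (2 * real m)
     = of_int (a - b) * of_int j * pi / (2 * real m)"
    by (simp add: diff_divide_distrib[symmetric] algebra_simps)
  have 2: "of_int a * of_int j * pi / (2 * real m) + of_int b * of_int j * pi / (2 * real m)
     = of_int (a + b) * of_int j * pi / (2 * real m)"
    by (simp add: add_divide_distrib[symmetric] algebra_simps)
  show ?thesis unfolding ct_def cos_times_cos 1 2 ..
qed

lemma weighted_rows:
  fixes F :: "int \<Rightarrow> real"
  assumes "m1 > 0" "m2 > 0"
  shows "(\<Sum>i1\<in>{0..int m1}. Wt m1 m2 i1 * F i1 * real (card (Rrow m1 m2 i1)))
       = (F 0 + F (int m1) + 2 * (\<Sum>j\<in>{1..<int m1}. F j)) / (2 * real m1)"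
proof -
  have split: "{0..int m1} = {0} \<union> {1..<int m1} \<union> {int m1}" using assms(1) by auto
  have "(\<Sum>i1\<in>{0..int m1}. Wt m1 m2 i1 * F i1 * real (card (Rrow m1 m2 i1)))
     = Wt m1 m2 0 * F 0 * real (card (Rrow m1 m2 0))
       + (\<Sum>i1\<in>{1..<int m1}. Wt m1 m2 i1 * F i1 * real (card (Rrow m1 m2 i1)))
       + Wt m1 m2 (int m1) * F (int m1) * real (card (Rrow m1 m2 (int m1)))"
    unfolding split using assms by (simp add: sum.union_disjoint algebra_simps)
  also have "(\<Sum>i1\<in>{1..<int m1}. Wt m1 m2 i1 * F i1 * real (card (Rrow m1 m2 i1)))
      = (\<Sum>i1\<in>{1..<int m1}. F i1 / real m1)"
    using assms by (intro sum.cong refl) (simp add: Wt_def card_Rrow field_simps)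
  also have "\<dots> = (\<Sum>i1\<in>{1..<int m1}. F i1) / real m1" by (simp add: sum_divide_distrib)
  also have "Wt m1 m2 0 * F 0 * real (card (Rrow m1 m2 0)) = F 0 / (2 * real m1)"
    using assms by (simp add: Wt_def card_Rrow field_simps)
  also have "Wt m1 m2 (int m1) * F (int m1) * real (card (Rrow m1 m2 (int m1))) = F (int m1) / (2 * real m1)"
    using assms by (simp add: Wt_def card_Rrow field_simps)
  finally show ?thesis using assms by (simp add: field_simps)
qed

definition Qv :: "nat \<Rightarrow> int \<Rightarrow> real" where
  "Qv m e = (if (4 * int m) dvd e then 2 * real m else 0)"

lemma trap_ct:
  assumes "even e" "m > 0"
  shows "ct m e 0 + ct m e (int m) + 2 * (\<Sum>j\<in>{1..<int m}. ct m e j) = Qv m e"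
proof -
  have "ct m e 0 + ct m e (int m) + 2 * (\<Sum>j\<in>{1..<int m}. ct m e j) = (\<Sum>j\<in>{0..<2 * int m}. ct m e j)"
    by (rule sym_sum[symmetric]) (use assms ct_sym in auto)
  also have "\<dots> = Qv m e" unfolding ct_def Qv_def by (rule Q_sum[OF assms])
  finally show ?thesis .
qed


lemma Gamma_sq_mem:
  assumes "g \<in> Gamma_sq m1 m2"
  shows "0 \<le> fst g" "fst g \<le> 2 * int m1" "- int m2 < snd g" "snd g \<le> int m2" "even (fst g + snd g)"
  using assms by (auto simp: Gamma_sq_def Kset_def)

lemma parity_aux:
  fixes a b c d :: int
  assumes "even (a + c)" "even (b + d)" "odd (c - d)"
  shows "odd a \<or> odd b"
  using assms by presburger

lemma parity_aux2:
  fixes a b c :: int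
  assumes "even (a + c)" "even (b + c)"
  shows "even (a - b)" "even (a + b)"
  using assms by presburger+

lemma inner_formula:
  assumes "m1 > 0" "m2 > 0" "g \<in> Gamma_sq m1 m2" "g' \<in> Gamma_sq m1 m2"
  shows "inner_w m1 m2 (chi m1 m2 g) (chi m1 m2 g')
    = (if snd g = snd g' then of_real ((Qv m1 (fst g - fst g') + Qv m1 (fst g + fst g')) / (4 * real m1)) else 0)"
proof (cases "snd g = snd g'")
  case False
  define d where "d = snd g - snd g'"
  have d0: "d \<noteq> 0" using False unfolding d_def by simp
  have dlt: "\<bar>d\<bar> < 2 * int m2" using Gamma_sq_mem[OF assms(3)] Gamma_sq_mem[OF assms(4)] unfolding d_def by linarith
  have "inner_w m1 m2 (chi m1 m2 g) (chi m1 m2 g') = 0"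
    unfolding inner_rows[OF assms(2)] d_def[symmetric]
  proof (rule sum.neutral, rule ballI)
    fix i1 assume i1: "i1 \<in> {0..int m1}"
    show "of_real (Wt m1 m2 i1 * (ct m1 (fst g) i1 * ct m1 (fst g') i1))
        * (\<Sum>i2\<in>Rrow m1 m2 i1. exp (\<i> * of_real (th m2 d * of_int i2))) = 0"
    proof (cases "i1 = int m1")
      case False
      thus ?thesis using rowsum_zero_lt[OF assms(2) d0 dlt False] by simp
    next
      case True
      show ?thesis
      proof (cases "even d")
        case True
        thus ?thesis using rowsum_zero_m1[OF assms(2) d0 dlt True] \<open>i1 = int m1\<close> by simp
      next
        case False
        have "odd (fst g) \<or> odd (fst g')"
          by (rule parity_aux[OF Gamma_sq_mem(5)[OF assms(3)] Gamma_sq_mem(5)[OF assms(4)]])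
             (use False in \<open>simp add: d_def\<close>)
        hence "ct m1 (fst g) i1 * ct m1 (fst g') i1 = 0"
          using ct_odd_m[OF _ assms(1)] \<open>i1 = int m1\<close> by auto
        thus ?thesis by simp
      qed
    qed
  qed
  thus ?thesis using False by simp
next
  case True
  define a where "a = fst g"
  define b where "b = fst g'"
  have ev: "even (a - b)" "even (a + b)"
    using parity_aux2[of a "snd g" b] Gamma_sq_mem(5)[OF assms(3)] Gamma_sq_mem(5)[OF assms(4)] True
    unfolding a_def b_def by auto
  define F where "F = (\<lambda>j. ct m1 a j * ct m1 b j)"
  have "inner_w m1 m2 (chi m1 m2 g) (chi m1 m2 g')
     = (\<Sum>i1\<in>{0..int m1}. of_real (Wt m1 m2 i1 * F i1) * of_nat (card (Rrow m1 m2 i1)))"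
    unfolding inner_rows[OF assms(2)] True F_def a_def b_def
    by (intro sum.cong refl) (simp add: th_def)
  also have "\<dots> = of_real (\<Sum>i1\<in>{0..int m1}. Wt m1 m2 i1 * F i1 * real (card (Rrow m1 m2 i1)))"
    by (simp add: of_real_sum)
  also have "(\<Sum>i1\<in>{0..int m1}. Wt m1 m2 i1 * F i1 * real (card (Rrow m1 m2 i1)))
      = (F 0 + F (int m1) + 2 * (\<Sum>j\<in>{1..<int m1}. F j)) / (2 * real m1)"
    by (rule weighted_rows[OF assms(1,2)])
  also have "F 0 + F (int m1) + 2 * (\<Sum>j\<in>{1..<int m1}. F j)
     = ((ct m1 (a - b) 0 + ct m1 (a - b) (int m1) + 2 * (\<Sum>j\<in>{1..<int m1}. ct m1 (a - b) j))
       + (ct m1 (a + b) 0 + ct m1 (a + b) (int m1) + 2 * (\<Sum>j\<in>{1..<int m1}. ct m1 (a + b) j))) / 2"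
    unfolding F_def ct_prod by (simp add: sum.distrib sum_divide_distrib[symmetric] field_simps)
  also have "\<dots> = (Qv m1 (a - b) + Qv m1 (a + b)) / 2"
    using trap_ct[OF ev(1) assms(1)] trap_ct[OF ev(2) assms(1)] by simp
  finally show ?thesis using True assms(1) unfolding a_def b_def by (simp add: field_simps)
qed


lemma span_from_orth:
  fixes I :: "'a set" and G :: "'b set" and w :: "'a \<Rightarrow> complex" and ch :: "'b \<Rightarrow> 'a \<Rightarrow> complex"
    and dv :: "'b \<Rightarrow> complex"
  assumes fin: "finite I" "finite G" and cardeq: "card G = card I"
    and orth: "\<And>g g'. g \<in> G \<Longrightarrow> g' \<in> G \<Longrightarrow> (\<Sum>i\<in>I. w i * ch g i * cnj (ch g' i)) = (if g = g' then dv g else 0)"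
    and nz: "\<And>g. g \<in> G \<Longrightarrow> dv g \<noteq> 0"
  shows "\<exists>c. \<forall>i\<in>I. f i = (\<Sum>g\<in>G. c g * ch g i)"
proof -
  define N where "N = card I"
  obtain fI where fI: "bij_betw fI {0..<N} I" using ex_bij_betw_nat_finite[OF fin(1)] unfolding N_def by blast
  obtain fG where fG: "bij_betw fG {0..<N} G" using ex_bij_betw_nat_finite[OF fin(2)] unfolding N_def cardeq by blast
  define A :: "complex mat" where "A = mat N N (\<lambda>(r, s). ch (fG r) (fI s))"
  define B :: "complex mat" where "B = mat N N (\<lambda>(s, r). w (fI s) * cnj (ch (fG r) (fI s)) / dv (fG r))"
  have AB: "A * B = 1\<^sub>m N"
  proof (rule eq_matI)
    fix i j assume "i < dim_row (1\<^sub>m N)" "j < dim_col (1\<^sub>m N)"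
    hence ij: "i < N" "j < N" by auto
    have "(A * B) $$ (i, j) = (\<Sum>k\<in>{0..<N}. ch (fG i) (fI k) * (w (fI k) * cnj (ch (fG j) (fI k)) / dv (fG j)))"
      using ij unfolding A_def B_def by (simp add: scalar_prod_def)
    also have "\<dots> = (\<Sum>k\<in>{0..<N}. w (fI k) * ch (fG i) (fI k) * cnj (ch (fG j) (fI k))) / dv (fG j)"
      by (simp add: sum_divide_distrib mult_ac)
    also have "(\<Sum>k\<in>{0..<N}. w (fI k) * ch (fG i) (fI k) * cnj (ch (fG j) (fI k)))
        = (\<Sum>x\<in>I. w x * ch (fG i) x * cnj (ch (fG j) x))"
      by (rule sum.reindex_bij_betw[OF fI])
    also have "\<dots> = (if fG i = fG j then dv (fG i) else 0)"
      using ij fG by (intro orth) (auto simp: bij_betw_def)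
    also have "(fG i = fG j) = (i = j)"
      using ij fG by (auto simp: bij_betw_def inj_on_def)
    finally show "(A * B) $$ (i, j) = 1\<^sub>m N $$ (i, j)"
      using ij nz[of "fG j"] fG by (auto simp: bij_betw_def)
  qed (auto simp: A_def B_def)
  have BA: "B * A = 1\<^sub>m N"
    by (rule mat_mult_left_right_inverse[OF _ _ AB]) (auto simp: A_def B_def)
  have BA': "(\<Sum>r\<in>{0..<N}. B $$ (s, r) * A $$ (r, s')) = (if s = s' then 1 else 0)"
    if "s < N" "s' < N" for s s'
  proof -
    have "(B * A) $$ (s, s') = (\<Sum>r\<in>{0..<N}. B $$ (s, r) * A $$ (r, s'))"
      using that unfolding A_def B_def by (simp add: scalar_prod_def)
    thus ?thesis using BA that by simp
  qed
  define c where "c = (\<lambda>g. (\<Sum>i\<in>I. w i * f i * cnj (ch g i)) / dv g)"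
  have cr: "c (fG r) = (\<Sum>s\<in>{0..<N}. f (fI s) * B $$ (s, r))" if "r < N" for r
  proof -
    have "c (fG r) = (\<Sum>s\<in>{0..<N}. w (fI s) * f (fI s) * cnj (ch (fG r) (fI s))) / dv (fG r)"
      unfolding c_def using sum.reindex_bij_betw[OF fI, of "\<lambda>i. w i * f i * cnj (ch (fG r) i)"] by simp
    also have "\<dots> = (\<Sum>s\<in>{0..<N}. f (fI s) * B $$ (s, r))"
      using that unfolding B_def by (simp add: sum_divide_distrib mult_ac)
    finally show ?thesis .
  qed
  show ?thesis
  proof (intro exI ballI)
    fix j assume "j \<in> I"
    then obtain s' where s': "s' < N" "j = fI s'" using fI by (auto simp: bij_betw_def)
    have "(\<Sum>g\<in>G. c g * ch g j) = (\<Sum>r\<in>{0..<N}. c (fG r) * ch (fG r) j)"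
      by (rule sum.reindex_bij_betw[OF fG, symmetric])
    also have "\<dots> = (\<Sum>r\<in>{0..<N}. \<Sum>s\<in>{0..<N}. f (fI s) * (B $$ (s, r) * A $$ (r, s')))"
      using s' unfolding A_def by (intro sum.cong refl) (simp add: cr sum_distrib_left mult_ac)
    also have "\<dots> = (\<Sum>s\<in>{0..<N}. f (fI s) * (\<Sum>r\<in>{0..<N}. B $$ (s, r) * A $$ (r, s')))"
      by (subst sum.swap) (simp add: sum_distrib_left)
    also have "\<dots> = (\<Sum>s\<in>{0..<N}. f (fI s) * (if s = s' then 1 else 0))"
      using s' by (intro sum.cong refl) (simp add: BA')
    also have "\<dots> = f j" using s' by (simp add: if_distrib[where f="\<lambda>x. f _ * x"] cong: if_cong)
    finally show "f j = (\<Sum>g\<in>G. c g * ch g j)" by simp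
  qed
qed


lemma card_Iset: assumes "m1 > 0" shows "card (Iset m1 m2) = (2 * m1 + 1) * m2"
proof -
  have "card (Iset m1 m2) = (\<Sum>i1\<in>{0..int m1}. card (Rrow m1 m2 i1))"
    unfolding Iset_Sigma by (rule card_SigmaI) (auto simp: Rrow_finite)
  also have "{0..int m1} = insert (int m1) {0..<int m1}" by auto
  also have "(\<Sum>i1\<in>insert (int m1) {0..<int m1}. card (Rrow m1 m2 i1)) = m2 + (\<Sum>i1\<in>{0..<int m1}. 2 * m2)"
    by (simp add: card_Rrow)
  also have "\<dots> = (2 * m1 + 1) * m2" by simp
  finally show ?thesis .
qed

lemma Gamma_Sigma: "Gamma_sq m1 m2 = Sigma {0..2 * int m1} (\<lambda>a. Pset (- int m2) m2 a)"
  unfolding Gamma_sq_def Kset_def Pset_def by (auto simp: add.commute)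

lemma card_Gamma: "card (Gamma_sq m1 m2) = (2 * m1 + 1) * m2"
proof -
  have "card (Gamma_sq m1 m2) = (\<Sum>a\<in>{0..2 * int m1}. card (Pset (- int m2) m2 a))"
    unfolding Gamma_Sigma by (rule card_SigmaI) (auto simp: Pset_finite)
  also have "\<dots> = (2 * m1 + 1) * m2" by (simp add: Pset_card nat_add_distrib nat_mult_distrib)
  finally show ?thesis .
qed

lemma Gamma_finite: "finite (Gamma_sq m1 m2)"
  unfolding Gamma_Sigma by (rule finite_SigmaI) (auto simp: Pset_finite)

lemma Qv_zero:
  assumes "e \<noteq> 0" "\<bar>e\<bar> < 4 * int m"
  shows "Qv m e = 0"
proof -
  have "\<not> (4 * int m) dvd e"
  proof
    assume "(4 * int m) dvd e"
    from dvd_imp_le_int[OF assms(1) this] assms(2) show False by simp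
  qed
  thus ?thesis unfolding Qv_def by simp
qed

lemma Qv_0: "Qv m 0 = 2 * real m" unfolding Qv_def by simp

lemma Qv_2m: "Qv m (4 * int m) = 2 * real m" unfolding Qv_def by simp

lemma inner_self:
  assumes "m1 > 0" "m2 > 0" "g \<in> Gamma_sq m1 m2"
  shows "inner_w m1 m2 (chi m1 m2 g) (chi m1 m2 g) = of_real (if fst g \<in> {0, 2 * int m1} then 1 else 1 / 2)"
proof -
  have b: "0 \<le> fst g" "fst g \<le> 2 * int m1" using Gamma_sq_mem[OF assms(3)] by auto
  have "Qv m1 (fst g + fst g) = (if fst g \<in> {0, 2 * int m1} then 2 * real m1 else 0)"
  proof (cases "fst g \<in> {0, 2 * int m1}")
    case True
    then show ?thesis
    proof
      assume "fst g = 0" thus ?thesis by (simp add: Qv_0)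
    next
      assume "fst g \<in> {2 * int m1}"
      hence "fst g + fst g = 4 * int m1" by simp
      thus ?thesis using \<open>fst g \<in> {2 * int m1}\<close> by (simp add: Qv_2m)
    qed
  next
    case False
    hence "fst g + fst g \<noteq> 0" "\<bar>fst g + fst g\<bar> < 4 * int m1" using b by auto
    thus ?thesis using False Qv_zero by simp
  qed
  hence r: "(Qv m1 (fst g - fst g) + Qv m1 (fst g + fst g)) / (4 * real m1) = (if fst g \<in> {0, 2 * int m1} then 1 else 1 / 2)"
    using assms(1) by (cases "fst g \<in> {0, 2 * int m1}") (simp_all add: Qv_0 field_simps)
  have "inner_w m1 m2 (chi m1 m2 g) (chi m1 m2 g) = of_real ((Qv m1 (fst g - fst g) + Qv m1 (fst g + fst g)) / (4 * real m1))"
    using inner_formula[OF assms(1,2,3,3)] by simp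
  thus ?thesis unfolding r .
qed

lemma inner_orth:
  assumes "m1 > 0" "m2 > 0" "g \<in> Gamma_sq m1 m2" "g' \<in> Gamma_sq m1 m2" "g \<noteq> g'"
  shows "inner_w m1 m2 (chi m1 m2 g) (chi m1 m2 g') = 0"
proof (cases "snd g = snd g'")
  case True
  hence ne: "fst g \<noteq> fst g'" using assms(5) by (simp add: prod_eq_iff)
  have b: "0 \<le> fst g" "fst g \<le> 2 * int m1" "0 \<le> fst g'" "fst g' \<le> 2 * int m1"
    using Gamma_sq_mem[OF assms(3)] Gamma_sq_mem[OF assms(4)] by auto
  have "Qv m1 (fst g - fst g') = 0" by (rule Qv_zero) (use ne b in auto)
  moreover have "Qv m1 (fst g + fst g') = 0" by (rule Qv_zero) (use ne b in auto)
  ultimately show ?thesis using inner_formula[OF assms(1-4)] by simp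
next
  case False
  thus ?thesis using inner_formula[OF assms(1-4)] by simp
qed


theorem theorem5p1:
  fixes m1 m2 :: nat
  assumes "m1 \<ge> 1" and "m2 \<ge> 1"
  shows "spectral_index_set m1 m2 (Gamma_sq m1 m2)
    \<and> card (Iset m1 m2) = (2 * m1 + 1) * m2
    \<and> (\<forall>\<gamma>\<in>Gamma_sq m1 m2.
         (norm_w m1 m2 (chi m1 m2 \<gamma>))\<^sup>2 =
           (if fst \<gamma> \<in> {0, 2 * int m1} then 1 else 1 / 2))"
proof -
  have m: "m1 > 0" "m2 > 0" using assms by auto
  have nz: "inner_w m1 m2 (chi m1 m2 g) (chi m1 m2 g) \<noteq> 0" if "g \<in> Gamma_sq m1 m2" for g
    using inner_self[OF m that] by simp
  have sp: "spectral_index_set m1 m2 (Gamma_sq m1 m2)"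
    unfolding spectral_index_set_def
  proof (intro conjI ballI impI allI)
    show "Gamma_sq m1 m2 \<subseteq> Kset m1 m2" by (auto simp: Gamma_sq_def)
  next
    fix g assume "g \<in> Gamma_sq m1 m2"
    thus "even (fst g + snd g)" by (rule Gamma_sq_mem(5))
  next
    fix g g' assume "g \<in> Gamma_sq m1 m2" "g' \<in> Gamma_sq m1 m2" "g \<noteq> g'"
    thus "inner_w m1 m2 (chi m1 m2 g) (chi m1 m2 g') = 0" by (rule inner_orth[OF m])
  next
    fix g assume "g \<in> Gamma_sq m1 m2"
    have "(0, 0) \<in> Iset m1 m2" using m by (auto simp: Iset_def)
    moreover have "chi m1 m2 g (0, 0) = 1" by (simp add: chi_def)
    ultimately show "\<exists>i\<in>Iset m1 m2. chi m1 m2 g i \<noteq> 0" by force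
  next
    fix f :: "int \<times> int \<Rightarrow> complex"
    show "\<exists>c. \<forall>i\<in>Iset m1 m2. f i = (\<Sum>\<gamma>\<in>Gamma_sq m1 m2. c \<gamma> * chi m1 m2 \<gamma> i)"
    proof (rule span_from_orth[where w="\<lambda>i. of_real (wgt m1 m2 i)"
          and dv="\<lambda>g. inner_w m1 m2 (chi m1 m2 g) (chi m1 m2 g)"])
      show "finite (Iset m1 m2)" by (rule Iset_finite)
      show "finite (Gamma_sq m1 m2)" by (rule Gamma_finite)
      show "card (Gamma_sq m1 m2) = card (Iset m1 m2)" using card_Gamma card_Iset[OF m(1)] by simp
    next
      fix g g' assume gg: "g \<in> Gamma_sq m1 m2" "g' \<in> Gamma_sq m1 m2"
      show "(\<Sum>i\<in>Iset m1 m2. of_real (wgt m1 m2 i) * chi m1 m2 g i * cnj (chi m1 m2 g' i))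
          = (if g = g' then inner_w m1 m2 (chi m1 m2 g) (chi m1 m2 g) else 0)"
        using inner_orth[OF m gg] unfolding inner_w_def by auto
    next
      fix g assume "g \<in> Gamma_sq m1 m2"
      thus "inner_w m1 m2 (chi m1 m2 g) (chi m1 m2 g) \<noteq> 0" by (rule nz)
    qed
  qed
  have nrm: "\<forall>\<gamma>\<in>Gamma_sq m1 m2. (norm_w m1 m2 (chi m1 m2 \<gamma>))\<^sup>2 =
           (if fst \<gamma> \<in> {0, 2 * int m1} then 1 else 1 / 2)"
  proof
    fix g assume g: "g \<in> Gamma_sq m1 m2"
    have "Re (inner_w m1 m2 (chi m1 m2 g) (chi m1 m2 g)) = (if fst g \<in> {0, 2 * int m1} then 1 else 1 / 2)"
      unfolding inner_self[OF m g] by simp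
    thus "(norm_w m1 m2 (chi m1 m2 g))\<^sup>2 = (if fst g \<in> {0, 2 * int m1} then 1 else 1 / 2)"
      unfolding norm_w_def by simp
  qed
  show ?thesis using sp card_Iset[OF m(1)] nrm by blast
qed

end
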